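(* Let $\mu$ be a positive Radon measure on $\mathbb{R}^d$ (not assumed to satisfy any growth condition or doubling condition), let $1 \le q < p < \infty$, and let $k>1$ and $\beta>1$ be fixed with $\beta > k^{\frac{dpq}{p-q}}$. Then there is a constant $C>0$ such that for all $f \in \mathcal{M}^p_q(\mu)$, \[ C^{-1}\,\| f \, : \, \mathcal{M}^p_q(\mu)\|_d \le \| f \, : \, \mathcal{M}^p_q(\mu)\| \le C\,\| f \, : \, \mathcal{M}^p_q(\mu)\|_d . \]
   Context: A "cube" $Q\subset\mathbb{R}^d$ is a closed cube with sides parallel to the axes; $Q(x,l)$ is the cube centered at $x$ with side length $l$, and for $\rho>0$, $\rho Q$ is the cube concentric with $Q$ with side length $\rho$ times that of $Q$. $\mathcal{Q}(\mu)$ is the set of all cubes $Q$ with $\mu(Q)>0$; if $\mu$ is finite, $\mathbb{R}^d$ is also included in $\mathcal{Q}(\mu)$. For $1\le q\le p<\infty$ and $f\in L^1_{loc}(\mu)$, \[ \| f \, : \, \mathcal{M}^p_q(\mu)\| := \sup_{Q \in \mathcal{Q}(\mu)} \mu(2Q)^{\frac{1}{p}-\frac{1}{q}} \Big(\int_Q|f|^q\,d\mu\Big)^{\frac{1}{q}}, \] and $\mathcal{M}^p_q(\mu)$ is the space of $f$ for which this is finite. A cube $Q\in\mathcal{Q}(\mu)$ is called $(k,\beta)$-doubling if $\mu(kQ)\le \beta\,\mu(Q)$; $\mathcal{Q}(\mu;k,\beta)$ denotes the set of all $(k,\beta)$-doubling cubes in $\mathcal{Q}(\mu)$, and \[ \|f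 \, : \, \mathcal{M}^p_q(\mu)\|_d := \sup_{Q \in \mathcal{Q}(\mu;k,\beta)} \mu(Q)^{\frac{1}{p}-\frac{1}{q}} \Big(\int_Q |f(y)|^q\,d\mu(y)\Big)^{\frac{1}{q}}. \] *)

theory Defs
  imports "HOL-Analysis.Analysis"
begin

definition cube :: "'a::euclidean_space \<Rightarrow> real \<Rightarrow> 'a set" where
  "cube x l = cbox (x - (l/2) *\<^sub>R One) (x + (l/2) *\<^sub>R One)"

definition radon_measure :: "'a::euclidean_space measure \<Rightarrow> bool" where
  "radon_measure M \<longleftrightarrow> sets M = sets borel \<and> (\<forall>K. compact K \<longrightarrow> emeasure M K < \<infinity>)"

definition L1_loc :: "'a::euclidean_space measure \<Rightarrow> ('a \<Rightarrow> real) set" where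
  "L1_loc M = {f. f \<in> borel_measurable M \<and> (\<forall>K. compact K \<longrightarrow> set_integrable M K f)}"

definition enn_pow :: "real \<Rightarrow> ennreal \<Rightarrow> ereal" where
  "enn_pow r x = (if x = \<infinity> then \<infinity> else ereal (enn2real x powr r))"

definition morrey_term :: "'a measure \<Rightarrow> real \<Rightarrow> real \<Rightarrow> ('a \<Rightarrow> real) \<Rightarrow> 'a set \<Rightarrow> 'a set \<Rightarrow> ereal" where
  "morrey_term M p q f B Q =
     ereal (measure M B powr (1/p - 1/q)) *
     enn_pow (1/q) (\<integral>\<^sup>+ y. ennreal (\<bar>f y\<bar> powr q) * indicator Q y \<partial>M)"

definition pos_cubes :: "'a::euclidean_space measure \<Rightarrow> ('a \<times> real) set" where
  "pos_cubes M = {(x, l). l > 0 \<and> emeasure M (cube x l) > 0}"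

definition doubling_cubes :: "'a::euclidean_space measure \<Rightarrow> real \<Rightarrow> real \<Rightarrow> ('a \<times> real) set" where
  "doubling_cubes M k \<beta> = {(x, l). (x, l) \<in> pos_cubes M \<and>
      emeasure M (cube x (k * l)) \<le> ennreal \<beta> * emeasure M (cube x l)}"

text \<open>Morrey norm. The whole space R^d belongs to Q(\<mu>) iff \<mu> is finite; then 2R^d = R^d.\<close>
definition morrey_norm :: "'a::euclidean_space measure \<Rightarrow> real \<Rightarrow> real \<Rightarrow> ('a \<Rightarrow> real) \<Rightarrow> ereal" where
  "morrey_norm M p q f =
     sup (SUP (x, l) \<in> pos_cubes M. morrey_term M p q f (cube x (2 * l)) (cube x l))
         (if emeasure M UNIV < \<infinity> then morrey_term M p q f UNIV UNIV else 0)"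

text \<open>Morrey norm taken over (k,\<beta>)-doubling cubes (R^d is trivially doubling since kR^d = R^d).\<close>
definition morrey_norm_d :: "'a::euclidean_space measure \<Rightarrow> real \<Rightarrow> real \<Rightarrow> real \<Rightarrow> real \<Rightarrow> ('a \<Rightarrow> real) \<Rightarrow> ereal" where
  "morrey_norm_d M k \<beta> p q f =
     sup (SUP (x, l) \<in> doubling_cubes M k \<beta>. morrey_term M p q f (cube x l) (cube x l))
         (if emeasure M UNIV < \<infinity> then morrey_term M p q f UNIV UNIV else 0)"

definition morrey_space :: "'a::euclidean_space measure \<Rightarrow> real \<Rightarrow> real \<Rightarrow> ('a \<Rightarrow> real) set" where
  "morrey_space M p q = {f \<in> L1_loc M. morrey_norm M p q f < \<infinity>}"

end

theory Submission
  imports Defs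
begin


lemma mem_cube: "z \<in> cube x l \<longleftrightarrow> (\<forall>b\<in>Basis. \<bar>z \<bullet> b - x \<bullet> b\<bar> \<le> l/2)"
proof -
  have "\<And>b. b \<in> Basis \<Longrightarrow> ((x - (l/2) *\<^sub>R One) \<bullet> b \<le> z \<bullet> b \<and> z \<bullet> b \<le> (x + (l/2) *\<^sub>R One) \<bullet> b)
     \<longleftrightarrow> \<bar>z \<bullet> b - x \<bullet> b\<bar> \<le> l/2"
    by (cases "z \<bullet> b \<le> x \<bullet> b"; simp add: inner_diff_left inner_add_left abs_if algebra_simps; linarith)
  then show ?thesis unfolding cube_def mem_box by blast
qed

lemma cube_subset:
  assumes "y \<in> cube x u" "u + s \<le> L"
  shows "cube y s \<subseteq> cube x L"
proof
  fix z assume "z \<in> cube y s"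
  then have "\<forall>b\<in>Basis. \<bar>z \<bullet> b - y \<bullet> b\<bar> \<le> s/2" by (simp add: mem_cube)
  moreover have "\<forall>b\<in>Basis. \<bar>y \<bullet> b - x \<bullet> b\<bar> \<le> u/2" using assms(1) by (simp add: mem_cube)
  ultimately show "z \<in> cube x L" unfolding mem_cube using assms(2)
    by (smt (verit, best) field_sum_of_halves)
qed

lemma cube_mono: "s \<le> s' \<Longrightarrow> cube y s \<subseteq> cube y s'"
  by (auto simp: mem_cube) (smt (verit))

lemma compact_cube: "compact (cube x l)"
  unfolding cube_def by simp

lemma closed_cube: "closed (cube x l)"
  unfolding cube_def by (rule closed_cbox)

lemma center_in_cube: "l \<ge> 0 \<Longrightarrow> x \<in> cube x l"
  by (auto simp: mem_cube)



lemma floor_eq_close: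
  fixes u v r :: real
  assumes "r > 0" "\<lfloor>u / r\<rfloor> = \<lfloor>v / r\<rfloor>"
  shows "\<bar>u - v\<bar> \<le> r"
proof -
  have "\<bar>u/r - v/r\<bar> < 1"
  proof -
    have "of_int \<lfloor>u/r\<rfloor> \<le> u/r" "u/r < of_int \<lfloor>u/r\<rfloor> + 1"
         "of_int \<lfloor>v/r\<rfloor> \<le> v/r" "v/r < of_int \<lfloor>v/r\<rfloor> + 1"
      by (simp_all add: of_int_floor_le real_of_int_floor_add_one_gt)
    then show ?thesis using assms(2) by linarith
  qed
  moreover have "u - v = r * (u/r - v/r)" using assms(1) by (simp add: field_simps)
  then have "\<bar>u - v\<bar> = r * \<bar>u/r - v/r\<bar>" using assms(1) by (simp add: abs_mult)
  ultimately show ?thesis using assms(1)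
    by (metis less_eq_real_def mult.right_neutral mult_left_mono)
qed

lemma grid_cover:
  fixes x :: "'a::euclidean_space"
  assumes r: "r > 0" and L: "L \<ge> 0" and S: "S \<subseteq> cube x L"
  shows "\<exists>F. finite F \<and> F \<subseteq> S \<and> card F \<le> (nat \<lceil>L/r\<rceil> + 1) ^ DIM('a)
             \<and> S \<subseteq> (\<Union>y\<in>F. cube y (2*r))"
proof -
  define n where "n = nat \<lceil>L/r\<rceil>"
  define idx where "idx z = restrict (\<lambda>b. nat \<lfloor>(z \<bullet> b - x \<bullet> b + L/2)/r\<rfloor>) Basis" for z :: 'a
  define P where "P = PiE (Basis::'a set) (\<lambda>_. {0..n})"
  have idx_range: "idx z \<in> P" if "z \<in> S" for z
  proof -
    have "nat \<lfloor>(z \<bullet> b - x \<bullet> b + L/2)/r\<rfloor> \<in> {0..n}" if b: "b \<in> Basis" for b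
    proof -
      have "\<bar>z \<bullet> b - x \<bullet> b\<bar> \<le> L/2" using \<open>z \<in> S\<close> S b by (auto simp: mem_cube)
      then have "z \<bullet> b - x \<bullet> b + L/2 \<le> L" by linarith
      then have "(z \<bullet> b - x \<bullet> b + L/2)/r \<le> L/r" using r by (intro divide_right_mono) auto
      then have "\<lfloor>(z \<bullet> b - x \<bullet> b + L/2)/r\<rfloor> \<le> \<lceil>L/r\<rceil>"
        by (meson floor_le_ceiling floor_mono order_trans)
      then show ?thesis unfolding n_def by (simp add: nat_mono)
    qed
    then show ?thesis unfolding P_def idx_def by auto
  qed
  define pick where "pick i = (SOME z. z \<in> S \<and> idx z = i)" for i
  have pick: "pick (idx z) \<in> S \<and> idx (pick (idx z)) = idx z" if "z \<in> S" for z
    unfolding pick_def by (rule someI[of _ z]) (use that in auto)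
  define F where "F = pick ` (idx ` S)"
  have finP: "finite P" unfolding P_def by (simp add: finite_PiE)
  have sub: "idx ` S \<subseteq> P" using idx_range by auto
  have "finite F" unfolding F_def using finite_subset[OF sub finP] by simp
  moreover have "F \<subseteq> S" unfolding F_def using pick by auto
  moreover have "card F \<le> (n + 1) ^ DIM('a)"
  proof -
    have "card F \<le> card (idx ` S)" unfolding F_def using finite_subset[OF sub finP] by (rule card_image_le)
    also have "\<dots> \<le> card P" using card_mono[OF finP sub] .
    also have "card P = (n+1) ^ DIM('a)" unfolding P_def by (simp add: card_PiE)
    finally show ?thesis .
  qed
  moreover have "S \<subseteq> (\<Union>y\<in>F. cube y (2*r))"
  proof
    fix z assume z: "z \<in> S"
    define y where "y = pick (idx z)"
    have y: "y \<in> F" "y \<in> S" "idx y = idx z" using pick[OF z] z unfolding y_def F_def by auto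
    have "\<bar>z \<bullet> b - y \<bullet> b\<bar> \<le> 2*r/2" if b: "b \<in> Basis" for b
    proof -
      have e: "nat \<lfloor>(z \<bullet> b - x \<bullet> b + L/2)/r\<rfloor> = nat \<lfloor>(y \<bullet> b - x \<bullet> b + L/2)/r\<rfloor>"
      proof -
        have "idx z b = idx y b" using y(3) by simp
        then show ?thesis using b unfolding idx_def by simp
      qed
      have "\<bar>z \<bullet> b - x \<bullet> b\<bar> \<le> L/2" using z S b by (auto simp: mem_cube)
      then have "0 \<le> (z \<bullet> b - x \<bullet> b + L/2)/r" using r by (intro divide_nonneg_pos) linarith+
      then have nz: "0 \<le> \<lfloor>(z \<bullet> b - x \<bullet> b + L/2)/r\<rfloor>" by simp
      have "\<bar>y \<bullet> b - x \<bullet> b\<bar> \<le> L/2" using y(2) S b by (auto simp: mem_cube)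
      then have "0 \<le> (y \<bullet> b - x \<bullet> b + L/2)/r" using r by (intro divide_nonneg_pos) linarith+
      then have ny: "0 \<le> \<lfloor>(y \<bullet> b - x \<bullet> b + L/2)/r\<rfloor>" by simp
      have "\<lfloor>(z \<bullet> b - x \<bullet> b + L/2)/r\<rfloor> = \<lfloor>(y \<bullet> b - x \<bullet> b + L/2)/r\<rfloor>"
        using e nz ny by (metis nat_eq_iff2)
      from floor_eq_close[OF r this] show ?thesis by simp
    qed
    then have "z \<in> cube y (2*r)" by (simp add: mem_cube)
    then show "z \<in> (\<Union>y\<in>F. cube y (2*r))" using y(1) by auto
  qed
  ultimately show ?thesis unfolding n_def by blast
qed



locale radon_setting =
  fixes M :: "'a::euclidean_space measure"
  assumes radon: "radon_measure M"
begin

lemma sets_M: "sets M = sets borel"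
  using radon unfolding radon_measure_def by auto

lemma closed_sets: "closed A \<Longrightarrow> A \<in> sets M"
  unfolding sets_M by (rule borel_closed)

lemma cube_sets: "cube x l \<in> sets M"
  by (rule closed_sets[OF closed_cube])

lemma compact_fin: "compact K \<Longrightarrow> emeasure M K < \<infinity>"
  using radon unfolding radon_measure_def by auto

lemma cube_fin: "emeasure M (cube x l) < \<infinity>"
  by (rule compact_fin[OF compact_cube])

lemma cube_emeasure: "emeasure M (cube x l) = ennreal (measure M (cube x l))"
  using cube_fin[of x l] by (intro emeasure_eq_ennreal_measure) auto

lemma measure_le_cube: "A \<subseteq> cube x l \<Longrightarrow> A \<in> sets M \<Longrightarrow> measure M A \<le> measure M (cube x l)"
  using cube_fin cube_sets by (intro measure_mono_fmeasurable) (auto simp: fmeasurable_def)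

lemma cube_measure_mono: "cube y s \<subseteq> cube x l \<Longrightarrow> measure M (cube y s) \<le> measure M (cube x l)"
  using measure_le_cube cube_sets by blast

end



context radon_setting
begin

lemma core_A:
  fixes \<nu> :: "'a measure"
  assumes sets_nu: "sets \<nu> = sets M"
    and ac: "\<And>A. A \<in> sets M \<Longrightarrow> emeasure M A = 0 \<Longrightarrow> emeasure \<nu> A = 0"
    and k: "k > 1" and \<beta>: "\<beta> > 1" and a: "a > 0" and T: "T \<ge> 0"
    and hyp: "\<And>y s. (y, s) \<in> pos_cubes M \<Longrightarrow>
                 emeasure \<nu> (cube y s) \<le> ennreal (T * measure M (cube y (2 * s)) powr a)"
    and dbl: "(x, l) \<in> doubling_cubes M k \<beta>"
  shows "emeasure \<nu> (cube x l) \<le>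
           ennreal (real ((nat \<lceil>4/(k-1)\<rceil> + 1) ^ DIM('a)) * T * \<beta> powr a * measure M (cube x l) powr a)"
proof -
  from dbl have l: "l > 0" and dbl2: "emeasure M (cube x (k*l)) \<le> ennreal \<beta> * emeasure M (cube x l)"
    unfolding doubling_cubes_def pos_cubes_def by auto
  define m where "m = measure M (cube x l)"
  have m0: "m \<ge> 0" unfolding m_def by simp
  have mk: "measure M (cube x (k*l)) \<le> \<beta> * m"
    using dbl2 unfolding cube_emeasure m_def using \<beta>
    by (simp add: ennreal_mult'[symmetric] ennreal_le_iff)
  define s where "s = (k - 1) * l / 2"
  have s: "s > 0" unfolding s_def using k l by simp
  have eq: "l / (s/2) = 4/(k-1)" unfolding s_def using k l by (simp add: field_simps)
  obtain F where F: "finite F" "F \<subseteq> cube x l"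
    "card F \<le> (nat \<lceil>l/(s/2)\<rceil> + 1) ^ DIM('a)" "cube x l \<subseteq> (\<Union>y\<in>F. cube y (2*(s/2)))"
    using grid_cover[of "s/2" l "cube x l" x] s l by auto
  define N0 where "N0 = (nat \<lceil>4/(k-1)\<rceil> + 1) ^ DIM('a)"
  have cardF: "card F \<le> N0" using F(3) unfolding eq N0_def .
  have each: "emeasure \<nu> (cube y s) \<le> ennreal (T * (\<beta> * m) powr a)" if y: "y \<in> F" for y
  proof (cases "emeasure M (cube y s) = 0")
    case True
    then show ?thesis using ac[OF cube_sets] by simp
  next
    case False
    then have "(y, s) \<in> pos_cubes M" using s unfolding pos_cubes_def by (auto simp: zero_less_iff_neq_zero)
    then have h: "emeasure \<nu> (cube y s) \<le> ennreal (T * measure M (cube y (2 * s)) powr a)" by (rule hyp)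
    have "cube y (2 * s) \<subseteq> cube x (k*l)"
      using F(2) y by (intro cube_subset[of y x l]) (auto simp: s_def field_simps)
    then have "measure M (cube y (2 * s)) \<le> \<beta> * m" using cube_measure_mono mk by (meson order_trans)
    then have "measure M (cube y (2 * s)) powr a \<le> (\<beta> * m) powr a"
      using a by (intro powr_mono2) auto
    then have "T * measure M (cube y (2 * s)) powr a \<le> T * (\<beta> * m) powr a" using T by (intro mult_left_mono)
    then show ?thesis using h by (meson ennreal_leI order_trans)
  qed
  have "emeasure \<nu> (cube x l) \<le> emeasure \<nu> (\<Union>y\<in>F. cube y s)"
    using F(4) cube_sets F(1) sets_nu by (intro emeasure_mono) (auto intro!: sets.finite_UN)
  also have "\<dots> \<le> (\<Sum>y\<in>F. emeasure \<nu> (cube y s))"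
    using F(1) cube_sets sets_nu by (intro emeasure_subadditive_finite) auto
  also have "\<dots> \<le> (\<Sum>y\<in>F. ennreal (T * (\<beta> * m) powr a))"
    using each by (intro sum_mono) auto
  also have "\<dots> = ennreal (real (card F) * (T * (\<beta> * m) powr a))"
    by (simp add: ennreal_mult' ennreal_of_nat_eq_real_of_nat)
  also have "\<dots> \<le> ennreal (real N0 * (T * (\<beta> * m) powr a))"
    using cardF T by (intro ennreal_leI mult_right_mono) auto
  also have "real N0 * (T * (\<beta> * m) powr a) = real N0 * T * \<beta> powr a * m powr a"
    by (simp add: powr_mult)
  finally show ?thesis unfolding N0_def m_def .
qed

end


context radon_setting
begin

lemma nondbl_step:
  assumes k: "k > 1" and \<beta>: "\<beta> > 1" and r: "r > 0"
    and nd: "(y, r) \<notin> doubling_cubes M k \<beta>"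
  shows "\<beta> * measure M (cube y r) \<le> measure M (cube y (k * r))"
proof (cases "emeasure M (cube y r) = 0")
  case True
  then have "measure M (cube y r) = 0" by (simp add: measure_def)
  then show ?thesis by simp
next
  case False
  then have "emeasure M (cube y r) > 0" by (simp add: zero_less_iff_neq_zero)
  with nd r have "\<not> emeasure M (cube y (k * r)) \<le> ennreal \<beta> * emeasure M (cube y r)"
    unfolding doubling_cubes_def pos_cubes_def by auto
  then have "ennreal (\<beta> * measure M (cube y r)) < ennreal (measure M (cube y (k * r)))"
    unfolding cube_emeasure using \<beta> by (simp add: ennreal_mult' not_le)
  then show ?thesis using \<beta> by (subst (asm) ennreal_less_iff) auto
qed

lemma chain:
  assumes k: "k > 1" and \<beta>: "\<beta> > 1" and l: "l > 0"
    and nd: "\<forall>i. 1 \<le> i \<and> i \<le> j \<longrightarrow> (y, l / k^i) \<notin> doubling_cubes M k \<beta>"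
  shows "measure M (cube y (l / k^j)) * \<beta>^j \<le> measure M (cube y l)"
  using nd
proof (induction j)
  case 0
  then show ?case by simp
next
  case (Suc j)
  have IH: "measure M (cube y (l / k^j)) * \<beta>^j \<le> measure M (cube y l)"
    using Suc.prems by (intro Suc.IH) auto
  have "(y, l / k^Suc j) \<notin> doubling_cubes M k \<beta>" using Suc.prems by auto
  from nondbl_step[OF k \<beta> _ this] have
    "\<beta> * measure M (cube y (l / k^Suc j)) \<le> measure M (cube y (k * (l / k^Suc j)))"
    using k l by simp
  also have "k * (l / k^Suc j) = l / k^j" using k by (simp add: field_simps)
  finally have st: "\<beta> * measure M (cube y (l / k^Suc j)) \<le> measure M (cube y (l / k^j))" .
  have "measure M (cube y (l / k^Suc j)) * \<beta>^Suc j = (\<beta> * measure M (cube y (l / k^Suc j))) * \<beta>^j"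
    by (simp add: algebra_simps)
  also have "\<dots> \<le> measure M (cube y (l / k^j)) * \<beta>^j"
    using st \<beta> by (intro mult_right_mono) auto
  finally show ?case using IH by linarith
qed

end


context radon_setting
begin

lemma card_bound:
  assumes k: "k > 1" and l: "l > 0"
  shows "real ((nat \<lceil>l / (l / k^j / 2)\<rceil> + 1) ^ d) \<le> 4^d * (k^d)^j"
proof -
  have kj: "k^j \<ge> 1" using k by (simp add: one_le_power)
  have e: "l / (l / k^j / 2) = 2 * k^j" using l k by (simp add: field_simps)
  have c: "real_of_int \<lceil>2 * k^j\<rceil> \<le> 2 * k^j + 1" by (rule of_int_ceiling_le_add_one)
  have c0: "0 \<le> \<lceil>2 * k^j\<rceil>" using kj by simp
  have "real (nat \<lceil>2 * k^j\<rceil> + 1) \<le> 4 * k^j" 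
  proof -
    have "real (nat \<lceil>2 * k^j\<rceil>) = real_of_int \<lceil>2 * k^j\<rceil>" using c0 by simp
    then show ?thesis using c kj by (simp only: of_nat_add of_nat_1)
  qed
  then have "real (nat \<lceil>2 * k^j\<rceil> + 1) ^ d \<le> (4 * k^j) ^ d"
    by (intro power_mono) auto
  also have "\<dots> = 4^d * (k^d)^j" by (simp add: power_mult_distrib power_mult[symmetric] mult.commute)
  finally show ?thesis unfolding e by simp
qed

lemma sum_const_ennreal: "0 \<le> v \<Longrightarrow> (\<Sum>y\<in>A. ennreal v) = ennreal (real (card A) * v)"
  by (simp add: ennreal_mult ennreal_of_nat_eq_real_of_nat)

lemma powr_pow: "0 < (x::real) \<Longrightarrow> (x^j) powr a = (x powr a)^j"
  by (simp add: powr_realpow[symmetric] powr_powr mult.commute)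

lemma core_B:
  fixes \<nu> :: "'a measure"
  assumes sets_nu: "sets \<nu> = sets M"
    and ac: "\<And>A. A \<in> sets M \<Longrightarrow> emeasure M A = 0 \<Longrightarrow> emeasure \<nu> A = 0"
    and k: "k > 1" and \<beta>: "\<beta> > 1" and a: "0 < a" "a \<le> 1"
    and \<rho>: "k ^ DIM('a) < \<beta> powr a"
    and K: "K \<ge> 0"
    and hyp: "\<And>y s. (y, s) \<in> doubling_cubes M k \<beta> \<Longrightarrow>
                 emeasure \<nu> (cube y s) \<le> ennreal (K * measure M (cube y s) powr a)"
    and l: "l > 0"
  shows "emeasure \<nu> (cube x l) \<le> ennreal (4 ^ DIM('a) * \<beta> powr a / (1 - k ^ DIM('a) / \<beta> powr a)
            * K * measure M (cube x (2*l)) powr a)"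
proof -
  define d where "d = DIM('a)"
  define r where "r j = l / k^j" for j :: nat
  define dbl where "dbl y j \<longleftrightarrow> (y, r j) \<in> doubling_cubes M k \<beta>" for y j
  define g where "g = measure M (cube x (2*l))"
  define B where "B = \<beta> powr a"
  define \<rho>' where "\<rho>' = k^d / B"
  define \<sigma> where "\<sigma> = k^d / \<beta>"
  have g0: "g \<ge> 0" unfolding g_def by simp
  have B0: "B > 0" unfolding B_def using \<beta> by simp
  have kd: "k^d < B" using \<rho> unfolding B_def d_def .
  have kd0: "k^d > 0" using k by simp
  have Bb: "B \<le> \<beta>" unfolding B_def using powr_mono[of a 1 \<beta>] a \<beta> by simp
  have \<rho>1: "\<rho>' < 1" "\<rho>' \<ge> 0" unfolding \<rho>'_def using kd B0 kd0 by (auto simp: divide_less_eq)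
  have \<sigma>1: "\<sigma> < 1" "\<sigma> \<ge> 0" unfolding \<sigma>_def using kd Bb \<beta> kd0 by (auto simp: divide_less_eq)
  have r_pos: "r j > 0" for j unfolding r_def using k l by simp
  have kj: "k^j \<ge> 1" for j :: nat using k by (simp add: one_le_power)
  have r_le: "r j \<le> l" for j unfolding r_def using kj[of j] l by (simp add: divide_le_eq)
  have r0: "r 0 = l" unfolding r_def by simp
  have r_mono: "r (Suc j) \<le> r j" for j unfolding r_def using k l kj[of j]
    by (simp add: divide_le_eq field_simps)
  have sub_G: "cube y (r j) \<subseteq> cube x (2*l)" if "y \<in> cube x l" for y j
    using that r_le[of j] by (intro cube_subset[of y x l]) auto
  have m_le_g: "measure M (cube y (r j)) \<le> g" if "y \<in> cube x l" for y j
    unfolding g_def using sub_G[OF that] by (rule cube_measure_mono)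
  have chainS: "measure M (cube y (r j)) * \<beta>^j \<le> \<beta> * g"
    if y: "y \<in> cube x l" and nd: "\<forall>i<j. \<not> dbl y i" for y j
  proof (cases j)
    case 0
    then show ?thesis using m_le_g[OF y, of 0] \<beta> g0 mult_right_mono[of 1 \<beta> g] by simp
  next
    case (Suc j')
    have "measure M (cube y (l / k^j')) * \<beta>^j' \<le> measure M (cube y l)"
      using nd Suc unfolding dbl_def r_def by (intro chain[OF k \<beta> l]) auto
    also have "\<dots> \<le> g" using m_le_g[OF y, of 0] r0 by simp
    finally have c: "measure M (cube y (r j')) * \<beta>^j' \<le> g" unfolding r_def .
    have "measure M (cube y (r j)) \<le> measure M (cube y (r j'))"
      using Suc r_mono[of j'] by (intro cube_measure_mono cube_mono) auto
    then have "measure M (cube y (r j)) * \<beta>^j \<le> measure M (cube y (r j')) * \<beta>^j' * \<beta>"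
      using Suc \<beta> by (simp add: mult_right_mono algebra_simps)
    also have "\<dots> \<le> g * \<beta>" using c \<beta> by (intro mult_right_mono) auto
    finally show ?thesis by (simp add: algebra_simps)
  qed
  have chainT: "measure M (cube y (r J)) * \<beta>^J \<le> g"
    if y: "y \<in> cube x l" and nd: "\<forall>i\<le>J. \<not> dbl y i" for y J
  proof -
    have "measure M (cube y (l / k^J)) * \<beta>^J \<le> measure M (cube y l)"
      using nd unfolding dbl_def r_def by (intro chain[OF k \<beta> l]) auto
    also have "\<dots> \<le> g" using m_le_g[OF y, of 0] r0 by simp
    finally show ?thesis unfolding r_def .
  qed
  define S where "S j = {y \<in> cube x l. dbl y j \<and> (\<forall>i<j. \<not> dbl y i)}" for j
  define T where "T J = {y \<in> cube x l. \<forall>i\<le>J. \<not> dbl y i}" for J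
  have "\<exists>F. finite F \<and> F \<subseteq> S j \<and> card F \<le> (nat \<lceil>l / (r j / 2)\<rceil> + 1) ^ d
             \<and> S j \<subseteq> (\<Union>y\<in>F. cube y (r j))" for j
  proof -
    have "S j \<subseteq> cube x l" unfolding S_def by auto
    from grid_cover[OF _ _ this, of "r j / 2"] r_pos[of j] l show ?thesis unfolding d_def by simp
  qed
  then obtain F where F: "\<And>j. finite (F j)" "\<And>j. F j \<subseteq> S j"
    "\<And>j. card (F j) \<le> (nat \<lceil>l / (r j / 2)\<rceil> + 1) ^ d"
    "\<And>j. S j \<subseteq> (\<Union>y\<in>F j. cube y (r j))"
    by metis
  have "\<exists>F. finite F \<and> F \<subseteq> T j \<and> card F \<le> (nat \<lceil>l / (r j / 2)\<rceil> + 1) ^ d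
             \<and> T j \<subseteq> (\<Union>y\<in>F. cube y (r j))" for j
  proof -
    have "T j \<subseteq> cube x l" unfolding T_def by auto
    from grid_cover[OF _ _ this, of "r j / 2"] r_pos[of j] l show ?thesis unfolding d_def by simp
  qed
  then obtain FT where FT: "\<And>j. finite (FT j)" "\<And>j. FT j \<subseteq> T j"
    "\<And>j. card (FT j) \<le> (nat \<lceil>l / (r j / 2)\<rceil> + 1) ^ d"
    "\<And>j. T j \<subseteq> (\<Union>y\<in>FT j. cube y (r j))"
    by metis
  have cardF: "real (card (F j)) \<le> 4^d * (k^d)^j" for j
  proof -
    have "real (card (F j)) \<le> real ((nat \<lceil>l / (r j / 2)\<rceil> + 1) ^ d)" using F(3)[of j] by linarith
    then show ?thesis using card_bound[OF k l, of j d] unfolding r_def by linarith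
  qed
  have cardFT: "real (card (FT j)) \<le> 4^d * (k^d)^j" for j
  proof -
    have "real (card (FT j)) \<le> real ((nat \<lceil>l / (r j / 2)\<rceil> + 1) ^ d)" using FT(3)[of j] by linarith
    then show ?thesis using card_bound[OF k l, of j d] unfolding r_def by linarith
  qed
  define U where "U j = (\<Union>y\<in>F j. cube y (r j))" for j
  define V where "V j = (\<Union>y\<in>FT j. cube y (r j))" for j
  define W where "W = (\<Inter>j. V j)"
  have U_sets: "U j \<in> sets M" for j
    unfolding U_def using F(1) by (intro closed_sets closed_UN) (auto intro: closed_cube)
  have V_closed: "closed (V j)" for j
    unfolding V_def using FT(1) by (intro closed_UN) (auto intro: closed_cube)
  have W_sets: "W \<in> sets M" unfolding W_def using V_closed by (intro closed_sets closed_INT) auto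
  have V_sets: "V j \<in> sets M" for j using V_closed closed_sets by auto
  have \<nu>U: "emeasure \<nu> (U j) \<le> ennreal (4^d * B * K * g powr a * \<rho>'^j)" for j
  proof -
    have each: "emeasure \<nu> (cube y (r j)) \<le> ennreal (K * (B * g powr a / B^j))" if y: "y \<in> F j" for y
    proof -
      have yS: "y \<in> S j" using F(2) y by auto
      then have yQ: "y \<in> cube x l" and dy: "dbl y j" and nd: "\<forall>i<j. \<not> dbl y i" unfolding S_def by auto
      have h: "emeasure \<nu> (cube y (r j)) \<le> ennreal (K * measure M (cube y (r j)) powr a)"
        using dy unfolding dbl_def by (rule hyp)
      have bj: "\<beta>^j > 0" using \<beta> by simp
      have "measure M (cube y (r j)) \<le> \<beta> * g / \<beta>^j" using chainS[OF yQ nd] bj by (simp add: pos_le_divide_eq)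
      then have "measure M (cube y (r j)) powr a \<le> (\<beta> * g / \<beta>^j) powr a" using a by (intro powr_mono2) auto
      also have "(\<beta> * g / \<beta>^j) powr a = B * g powr a / B^j"
        unfolding B_def using \<beta> by (simp add: powr_divide powr_mult powr_pow)
      finally have "K * measure M (cube y (r j)) powr a \<le> K * (B * g powr a / B^j)" using K by (intro mult_left_mono)
      then show ?thesis using h by (meson ennreal_leI order_trans)
    qed
    have "emeasure \<nu> (U j) \<le> (\<Sum>y\<in>F j. emeasure \<nu> (cube y (r j)))"
      unfolding U_def using F(1) cube_sets sets_nu by (intro emeasure_subadditive_finite) auto
    also have "\<dots> \<le> (\<Sum>y\<in>F j. ennreal (K * (B * g powr a / B^j)))"
      using each by (intro sum_mono) auto
    also have "\<dots> = ennreal (real (card (F j)) * (K * (B * g powr a / B^j)))"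
      using K B0 by (intro sum_const_ennreal) auto
    also have "\<dots> \<le> ennreal (4^d * (k^d)^j * (K * (B * g powr a / B^j)))"
      using cardF[of j] K B0 by (intro ennreal_leI mult_right_mono) auto
    also have "4^d * (k^d)^j * (K * (B * g powr a / B^j)) = 4^d * B * K * g powr a * \<rho>'^j"
      unfolding \<rho>'_def using B0 by (simp add: power_divide field_simps)
    finally show ?thesis .
  qed
  have \<mu>V: "emeasure M (V j) \<le> ennreal (4^d * g * \<sigma>^j)" for j
  proof -
    have each: "emeasure M (cube y (r j)) \<le> ennreal (g / \<beta>^j)" if y: "y \<in> FT j" for y
    proof -
      have yT: "y \<in> T j" using FT(2) y by auto
      then have yQ: "y \<in> cube x l" and nd: "\<forall>i\<le>j. \<not> dbl y i" unfolding T_def by auto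
      have bj: "\<beta>^j > 0" using \<beta> by simp
      have "measure M (cube y (r j)) \<le> g / \<beta>^j" using chainT[OF yQ nd] bj by (simp add: pos_le_divide_eq)
      then show ?thesis unfolding cube_emeasure by (rule ennreal_leI)
    qed
    have "emeasure M (V j) \<le> (\<Sum>y\<in>FT j. emeasure M (cube y (r j)))"
      unfolding V_def using FT(1) cube_sets by (intro emeasure_subadditive_finite) auto
    also have "\<dots> \<le> (\<Sum>y\<in>FT j. ennreal (g / \<beta>^j))"
      using each by (intro sum_mono) auto
    also have "\<dots> = ennreal (real (card (FT j)) * (g / \<beta>^j))"
      using g0 \<beta> by (intro sum_const_ennreal) auto
    also have "\<dots> \<le> ennreal (4^d * (k^d)^j * (g / \<beta>^j))"
      using cardFT[of j] g0 \<beta> by (intro ennreal_leI mult_right_mono) auto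
    also have "4^d * (k^d)^j * (g / \<beta>^j) = 4^d * g * \<sigma>^j"
      unfolding \<sigma>_def using \<beta> by (simp add: power_divide field_simps)
    finally show ?thesis .
  qed
  have W0: "emeasure M W = 0"
  proof -
    have le: "emeasure M W \<le> ennreal (4^d * g * \<sigma>^j)" for j
    proof -
      have "W \<subseteq> V j" unfolding W_def by auto
      then have "emeasure M W \<le> emeasure M (V j)" using V_sets by (intro emeasure_mono) auto
      then show ?thesis using \<mu>V[of j] by (rule order_trans)
    qed
    have fin: "emeasure M W \<noteq> top" using le_less_trans[OF le[of 0] ennreal_less_top] by simp
    then have eq: "emeasure M W = ennreal (measure M W)" by (rule emeasure_eq_ennreal_measure)
    have le2: "measure M W \<le> 4^d * g * \<sigma>^j" for j
      using le[of j] g0 \<sigma>1 unfolding eq by (subst (asm) ennreal_le_iff) auto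
    have "(\<lambda>j. 4^d * g * \<sigma>^j) \<longlonglongrightarrow> 4^d * g * 0"
      using \<sigma>1 by (intro tendsto_mult tendsto_const LIMSEQ_power_zero) auto
    then have "measure M W \<le> 0" using le2 by (intro LIMSEQ_le_const) auto
    then have "measure M W = 0" by (simp add: antisym)
    then show ?thesis unfolding eq by simp
  qed
  have cover: "cube x l \<subseteq> (\<Union>j. U j) \<union> W"
  proof
    fix y assume y: "y \<in> cube x l"
    show "y \<in> (\<Union>j. U j) \<union> W"
    proof (cases "\<exists>j. dbl y j")
      case True
      define j0 where "j0 = (LEAST j. dbl y j)"
      have "dbl y j0" using True LeastI_ex unfolding j0_def by metis
      moreover have "\<forall>i<j0. \<not> dbl y i" using not_less_Least unfolding j0_def by blast
      ultimately have "y \<in> S j0" using y unfolding S_def by auto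
      then have "y \<in> U j0" using F(4) unfolding U_def by blast
      then show ?thesis by blast
    next
      case False
      then have "y \<in> T j" for j using y unfolding T_def by auto
      then have "y \<in> V j" for j using FT(4) unfolding V_def by blast
      then show ?thesis unfolding W_def by blast
    qed
  qed
  define c where "c = 4^d * B * K * g powr a"
  have c0: "c \<ge> 0" unfolding c_def using B0 K by simp
  have "emeasure \<nu> (cube x l) \<le> emeasure \<nu> ((\<Union>j. U j) \<union> W)"
    using cover U_sets W_sets sets_nu by (intro emeasure_mono) auto
  also have "\<dots> \<le> emeasure \<nu> (\<Union>j. U j) + emeasure \<nu> W"
    using U_sets W_sets sets_nu by (intro emeasure_subadditive) auto
  also have "emeasure \<nu> W = 0" using ac[OF W_sets W0] .
  also have "emeasure \<nu> (\<Union>j. U j) \<le> (\<Sum>j. emeasure \<nu> (U j))"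
    using U_sets sets_nu by (intro emeasure_subadditive_countably) auto
  also have "\<dots> \<le> (\<Sum>j. ennreal (c * \<rho>'^j))"
    using \<nu>U unfolding c_def by (intro suminf_le summableI) auto
  also have "\<dots> = ennreal (c * (1 / (1 - \<rho>')))"
    using \<rho>1 c0 by (intro suminf_ennreal_eq sums_mult geometric_sums) auto
  also have "c * (1 / (1 - \<rho>')) = 4 ^ DIM('a) * \<beta> powr a / (1 - k ^ DIM('a) / \<beta> powr a)
            * K * measure M (cube x (2*l)) powr a"
    unfolding c_def \<rho>'_def B_def d_def g_def by simp
  finally show ?thesis by simp
qed

end


lemma term_to_I:
  assumes q: "0 < q" "q < p" and mB: "0 < measure M B"
    and le: "morrey_term M p q f B Q \<le> ereal T"
  shows "(\<integral>\<^sup>+ y. ennreal (\<bar>f y\<bar> powr q) * indicator Q y \<partial>M) \<le> ennreal (T powr q * measure M B powr (1 - q/p))"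
proof -
  define I where "I = (\<integral>\<^sup>+ y. ennreal (\<bar>f y\<bar> powr q) * indicator Q y \<partial>M)"
  define m where "m = measure M B"
  have m0: "m > 0" using mB unfolding m_def .
  have mp: "m powr (1/p - 1/q) > 0" using m0 by simp
  have e: "morrey_term M p q f B Q = ereal (m powr (1/p - 1/q)) * enn_pow (1/q) I"
    unfolding morrey_term_def I_def m_def ..
  have fin: "I \<noteq> top"
  proof
    assume "I = top"
    then have "morrey_term M p q f B Q = \<infinity>" unfolding e enn_pow_def using mp by simp
    then show False using le by simp
  qed
  then obtain i where i: "I = ennreal i" "i \<ge> 0" by (cases I) auto
  have "enn_pow (1/q) I = ereal (i powr (1/q))" unfolding enn_pow_def i using i(2) by simp
  with le e have "m powr (1/p - 1/q) * i powr (1/q) \<le> T" by simp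
  then have "i powr (1/q) \<le> T / m powr (1/p - 1/q)" using mp by (simp add: pos_le_divide_eq mult.commute)
  also have "T / m powr (1/p - 1/q) = T * m powr (1/q - 1/p)"
    using m0 by (simp add: powr_minus_divide[symmetric] divide_inverse powr_minus[symmetric])
  finally have h: "i powr (1/q) \<le> T * m powr (1/q - 1/p)" .
  have "i = (i powr (1/q)) powr q" using q i(2) by (simp add: powr_powr)
  also have "\<dots> \<le> (T * m powr (1/q - 1/p)) powr q" using h q by (intro powr_mono2) auto
  also have "\<dots> = T powr q * m powr ((1/q - 1/p) * q)"
    by (simp add: powr_mult powr_powr)
  also have "(1/q - 1/p) * q = 1 - q/p" using q by (simp add: field_simps)
  finally show ?thesis unfolding I_def[symmetric] i m_def by (rule ennreal_leI)
qed

lemma I_to_term: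
  assumes q: "0 < q" "q < p" and mB: "0 < measure M B" and T: "T \<ge> 0"
    and le: "(\<integral>\<^sup>+ y. ennreal (\<bar>f y\<bar> powr q) * indicator Q y \<partial>M) \<le> ennreal (T powr q * measure M B powr (1 - q/p))"
  shows "morrey_term M p q f B Q \<le> ereal T"
proof -
  define I where "I = (\<integral>\<^sup>+ y. ennreal (\<bar>f y\<bar> powr q) * indicator Q y \<partial>M)"
  define m where "m = measure M B"
  have m0: "m > 0" using mB unfolding m_def .
  have mp: "m powr (1/p - 1/q) > 0" using m0 by simp
  have e: "morrey_term M p q f B Q = ereal (m powr (1/p - 1/q)) * enn_pow (1/q) I"
    unfolding morrey_term_def I_def m_def ..
  have le': "I \<le> ennreal (T powr q * m powr (1 - q/p))" using le unfolding I_def m_def .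
  have fin: "I \<noteq> top" using le_less_trans[OF le' ennreal_less_top] by simp
  then obtain i where i: "I = ennreal i" "i \<ge> 0" by (cases I) auto
  have ep: "enn_pow (1/q) I = ereal (i powr (1/q))" unfolding enn_pow_def i using i(2) by simp
  have "ennreal i \<le> ennreal (T powr q * m powr (1 - q/p))" using le' i by simp
  then have "i \<le> T powr q * m powr (1 - q/p)" by (subst (asm) ennreal_le_iff) auto
  then have "i powr (1/q) \<le> (T powr q * m powr (1 - q/p)) powr (1/q)" using q i(2) by (intro powr_mono2) auto
  also have "\<dots> = (T powr q) powr (1/q) * m powr ((1 - q/p) * (1/q))"
    by (simp add: powr_mult powr_powr)
  also have "(T powr q) powr (1/q) = T" using q T by (simp add: powr_powr)
  also have "(1 - q/p) * (1/q) = 1/q - 1/p" using q by (simp add: field_simps)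
  finally have h: "i powr (1/q) \<le> T * m powr (1/q - 1/p)" .
  have "m powr (1/p - 1/q) * i powr (1/q) \<le> m powr (1/p - 1/q) * (T * m powr (1/q - 1/p))"
    using h mp by (intro mult_left_mono) auto
  also have "\<dots> = T * (m powr (1/p - 1/q) * m powr (1/q - 1/p))" by simp
  also have "m powr (1/p - 1/q) * m powr (1/q - 1/p) = 1"
    using m0 by (simp add: powr_add[symmetric])
  finally have "m powr (1/p - 1/q) * i powr (1/q) \<le> T" by simp
  then show ?thesis unfolding e ep by simp
qed



lemma term_nonneg: "0 \<le> morrey_term M p q f B Q"
  unfolding morrey_term_def enn_pow_def by (auto intro!: ereal_0_le_mult)

lemma norm_nonneg: "0 \<le> morrey_norm M p q f"
  unfolding morrey_norm_def by (rule order_trans[OF _ sup_ge2]) (auto simp: term_nonneg)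

lemma norm_d_nonneg: "0 \<le> morrey_norm_d M k \<beta> p q f"
  unfolding morrey_norm_d_def by (rule order_trans[OF _ sup_ge2]) (auto simp: term_nonneg)

theorem theorem1:
  fixes M :: "'a::euclidean_space measure" and p q k \<beta> :: real
  assumes "radon_measure M"
    and "1 \<le> q" and "q < p"
    and "k > 1" and "\<beta> > 1"
    and "\<beta> > k powr (real DIM('a) * p * q / (p - q))"
  shows "\<exists>C>0. \<forall>f \<in> morrey_space M p q.
           morrey_norm_d M k \<beta> p q f \<le> ereal C * morrey_norm M p q f \<and>
           morrey_norm M p q f \<le> ereal C * morrey_norm_d M k \<beta> p q f"
proof -
  interpret radon_setting M using assms(1) by unfold_locales
  note k = assms(4) and \<beta> = assms(5) and hb = assms(6)
  define a where "a = 1 - q/p"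
  have q0: "q > 0" and p0: "p > 0" using assms(2,3) by auto
  have a: "0 < a" "a \<le> 1" unfolding a_def using q0 p0 assms(3) by (auto simp: field_simps)
  have \<rho>: "k ^ DIM('a) < \<beta> powr a"
  proof -
    define X where "X = real DIM('a) * p * q / (p - q)"
    have "(k powr X) powr a < \<beta> powr a" using hb a unfolding X_def by (intro powr_less_mono2) auto
    moreover have "(k powr X) powr a = k powr (real DIM('a) * q)"
    proof -
      have "X * a = real DIM('a) * q" unfolding X_def a_def using assms(3) q0 p0 by (simp add: field_simps)
      then show ?thesis by (simp add: powr_powr)
    qed
    moreover have "k powr (real DIM('a)) \<le> k powr (real DIM('a) * q)"
      using k assms(2) by (intro powr_mono) auto
    moreover have "k powr (real DIM('a)) = k ^ DIM('a)" using k by (simp add: powr_realpow)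
    ultimately show ?thesis by linarith
  qed
  define N0 where "N0 = real ((nat \<lceil>4/(k-1)\<rceil> + 1) ^ DIM('a))"
  define CA where "CA = (N0 * \<beta> powr a) powr (1/q)"
  define C0 where "C0 = 4 ^ DIM('a) * \<beta> powr a / (1 - k ^ DIM('a) / \<beta> powr a)"
  define CB where "CB = C0 powr (1/q)"
  define C where "C = max 1 (max CA CB)"
  have N0: "N0 \<ge> 0" unfolding N0_def by simp
  have C0: "C0 \<ge> 0" unfolding C0_def using \<rho> \<beta> by (simp add: divide_less_eq)
  have CA_q: "CA powr q = N0 * \<beta> powr a" unfolding CA_def using q0 N0 by (simp add: powr_powr)
  have CB_q: "CB powr q = C0" unfolding CB_def using q0 C0 by (simp add: powr_powr)
  have CA0: "CA \<ge> 0" "CB \<ge> 0" unfolding CA_def CB_def by auto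
  have C1: "C \<ge> 1" "C \<ge> CA" "C \<ge> CB" unfolding C_def by auto
  have "\<forall>f \<in> morrey_space M p q.
           morrey_norm_d M k \<beta> p q f \<le> ereal C * morrey_norm M p q f \<and>
           morrey_norm M p q f \<le> ereal C * morrey_norm_d M k \<beta> p q f"
  proof
    fix f assume f: "f \<in> morrey_space M p q"
    then have fm: "f \<in> borel_measurable M" and Nfin: "morrey_norm M p q f < \<infinity>"
      unfolding morrey_space_def L1_loc_def by auto
    define \<nu> where "\<nu> = density M (\<lambda>y. ennreal (\<bar>f y\<bar> powr q))"
    have gm: "(\<lambda>y. ennreal (\<bar>f y\<bar> powr q)) \<in> borel_measurable M" using fm by measurable
    have I\<nu>: "(\<integral>\<^sup>+ y. ennreal (\<bar>f y\<bar> powr q) * indicator A y \<partial>M) = emeasure \<nu> A" if "A \<in> sets M" for A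
      unfolding \<nu>_def using gm that by (simp add: emeasure_density)
    have sets_nu: "sets \<nu> = sets M" unfolding \<nu>_def by simp
    have ac: "emeasure \<nu> A = 0" if "A \<in> sets M" "emeasure M A = 0" for A
      unfolding I\<nu>[OF that(1), symmetric] using that by (intro nn_integral_null_set) (auto simp: null_sets_def)
    define N where "N = morrey_norm M p q f"
    define Nd where "Nd = morrey_norm_d M k \<beta> p q f"
    define U where "U = (if emeasure M UNIV < \<infinity> then morrey_term M p q f UNIV UNIV else 0)"
    have N_def': "N = sup (SUP (x, l) \<in> pos_cubes M. morrey_term M p q f (cube x (2 * l)) (cube x l)) U"
      unfolding N_def morrey_norm_def U_def ..
    have Nd_def': "Nd = sup (SUP (x, l) \<in> doubling_cubes M k \<beta>. morrey_term M p q f (cube x l) (cube x l)) U"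
      unfolding Nd_def morrey_norm_d_def U_def ..
    have pos_meas: "measure M (cube x l) > 0" if "emeasure M (cube x l) > 0" for x l
      using that unfolding cube_emeasure by simp
    have pos2: "measure M (cube x (2 * l)) > 0" if "(x, l) \<in> pos_cubes M" for x l
    proof -
      from that have l: "l > 0" and e: "emeasure M (cube x l) > 0" unfolding pos_cubes_def by auto
      have "measure M (cube x l) \<le> measure M (cube x (2 * l))" using l by (intro cube_measure_mono cube_mono) auto
      then show ?thesis using pos_meas[OF e] by linarith
    qed
    have dirA: "Nd \<le> ereal C * N"
    proof -
      obtain t where t: "N = ereal t" using Nfin norm_nonneg[of M p q f] unfolding N_def
        by (cases "morrey_norm M p q f") auto
      have t0: "t \<ge> 0" using norm_nonneg[of M p q f] t unfolding N_def by simp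
      have hypA: "emeasure \<nu> (cube y s) \<le> ennreal (t powr q * measure M (cube y (2 * s)) powr a)"
        if ys: "(y, s) \<in> pos_cubes M" for y s
      proof -
        have "morrey_term M p q f (cube y (2 * s)) (cube y s) \<le> N"
          unfolding N_def' by (rule order_trans[OF _ sup_ge1]) (rule SUP_upper2[OF ys], simp)
        then have "(\<integral>\<^sup>+ z. ennreal (\<bar>f z\<bar> powr q) * indicator (cube y s) z \<partial>M)
                     \<le> ennreal (t powr q * measure M (cube y (2 * s)) powr (1 - q/p))"
          unfolding t using q0 assms(3) pos2[OF ys] by (intro term_to_I) auto
        then show ?thesis unfolding I\<nu>[OF cube_sets] a_def .
      qed
      have each: "morrey_term M p q f (cube x l) (cube x l) \<le> ereal (C * t)"
        if xl: "(x, l) \<in> doubling_cubes M k \<beta>" for x l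
      proof -
        have "emeasure \<nu> (cube x l) \<le> ennreal (N0 * t powr q * \<beta> powr a * measure M (cube x l) powr a)"
          unfolding N0_def using core_A[OF sets_nu ac k \<beta> a(1) _ hypA xl] by simp
        also have "N0 * t powr q * \<beta> powr a * measure M (cube x l) powr a
                   = (CA * t) powr q * measure M (cube x l) powr (1 - q/p)"
          unfolding powr_mult CA_q a_def by simp
        finally have h: "emeasure \<nu> (cube x l) \<le> ennreal ((CA * t) powr q * measure M (cube x l) powr (1 - q/p))" .
        have mp: "measure M (cube x l) > 0" using xl pos_meas unfolding doubling_cubes_def pos_cubes_def by auto
        have "morrey_term M p q f (cube x l) (cube x l) \<le> ereal (CA * t)"
          using q0 assms(3) mp h t0 C1 CA0 unfolding I\<nu>[OF cube_sets, symmetric]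
          by (intro I_to_term) auto
        also have "ereal (CA * t) \<le> ereal (C * t)" using C1 t0 by (simp add: mult_right_mono)
        finally show ?thesis .
      qed
      have "Nd \<le> ereal (C * t)"
        unfolding Nd_def'
      proof (rule sup_least)
        show "(SUP (x, l) \<in> doubling_cubes M k \<beta>. morrey_term M p q f (cube x l) (cube x l)) \<le> ereal (C * t)"
          using each by (intro SUP_least) auto
        have "U \<le> N" unfolding N_def' by (rule sup_ge2)
        also have "N \<le> ereal (C * t)" unfolding t using C1 t0 by (simp add: mult_le_cancel_right1)
        finally show "U \<le> ereal (C * t)" .
      qed
      then show ?thesis unfolding t by simp
    qed
    have dirB: "N \<le> ereal C * Nd"
    proof (cases "Nd = \<infinity>")
      case True
      have "C > 0" using C1 by simp
      then show ?thesis using True by simp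
    next
      case False
      obtain s' where s': "Nd = ereal s'" using False norm_d_nonneg[of M k \<beta> p q f] unfolding Nd_def
        by (cases "morrey_norm_d M k \<beta> p q f") auto
      have s0: "s' \<ge> 0" using norm_d_nonneg[of M k \<beta> p q f] s' unfolding Nd_def by simp
      have hypB: "emeasure \<nu> (cube y s) \<le> ennreal (s' powr q * measure M (cube y s) powr a)"
        if ys: "(y, s) \<in> doubling_cubes M k \<beta>" for y s
      proof -
        have "morrey_term M p q f (cube y s) (cube y s) \<le> Nd"
          unfolding Nd_def' by (rule order_trans[OF _ sup_ge1]) (rule SUP_upper2[OF ys], simp)
        moreover have "measure M (cube y s) > 0"
          using ys pos_meas unfolding doubling_cubes_def pos_cubes_def by auto
        ultimately have "(\<integral>\<^sup>+ z. ennreal (\<bar>f z\<bar> powr q) * indicator (cube y s) z \<partial>M)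
                     \<le> ennreal (s' powr q * measure M (cube y s) powr (1 - q/p))"
          unfolding s' using q0 assms(3) by (intro term_to_I) auto
        then show ?thesis unfolding I\<nu>[OF cube_sets] a_def .
      qed
      have each: "morrey_term M p q f (cube x (2 * l)) (cube x l) \<le> ereal (C * s')"
        if xl: "(x, l) \<in> pos_cubes M" for x l
      proof -
        have l: "l > 0" using xl unfolding pos_cubes_def by auto
        have "emeasure \<nu> (cube x l) \<le> ennreal (C0 * s' powr q * measure M (cube x (2 * l)) powr a)"
          unfolding C0_def using core_B[OF sets_nu ac k \<beta> a \<rho> _ hypB l] by simp
        also have "C0 * s' powr q * measure M (cube x (2 * l)) powr a
                   = (CB * s') powr q * measure M (cube x (2 * l)) powr (1 - q/p)"
          unfolding powr_mult CB_q a_def by simp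
        finally have h: "emeasure \<nu> (cube x l) \<le> ennreal ((CB * s') powr q * measure M (cube x (2 * l)) powr (1 - q/p))" .
        have "morrey_term M p q f (cube x (2 * l)) (cube x l) \<le> ereal (CB * s')"
          using q0 assms(3) pos2[OF xl] h s0 C1 CA0 unfolding I\<nu>[OF cube_sets, symmetric]
          by (intro I_to_term) auto
        also have "ereal (CB * s') \<le> ereal (C * s')" using C1 s0 by (simp add: mult_right_mono)
        finally show ?thesis .
      qed
      have "N \<le> ereal (C * s')"
        unfolding N_def'
      proof (rule sup_least)
        show "(SUP (x, l) \<in> pos_cubes M. morrey_term M p q f (cube x (2 * l)) (cube x l)) \<le> ereal (C * s')"
          using each by (intro SUP_least) auto
        have "U \<le> Nd" unfolding Nd_def' by (rule sup_ge2)
        also have "Nd \<le> ereal (C * s')" unfolding s' using C1 s0 by (simp add: mult_le_cancel_right1)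
        finally show "U \<le> ereal (C * s')" .
      qed
      then show ?thesis unfolding s' by simp
    qed
    show "morrey_norm_d M k \<beta> p q f \<le> ereal C * morrey_norm M p q f \<and>
           morrey_norm M p q f \<le> ereal C * morrey_norm_d M k \<beta> p q f"
      using dirA dirB unfolding N_def Nd_def by simp
  qed
  moreover have "C > 0" using C1 by simp
  ultimately show ?thesis by blast
qed


end
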